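(* Let $n\geq 2$, $m\geq 1$, $r\geq 4$ be integers and let $\alpha$ be an integer with $1\leq\alpha<(m+1)^n$. Then $\Gamma_n^{\alpha,r}$ is homotopy equivalent to the induced subcomplex of $\Gamma_n^{\alpha,r}$ on the vertex set $\{x\in V(\Gamma_n^{\alpha,r}) : |x_i|<\lfloor r/2\rfloor \text{ and } |x_j|+|x_k|\leq\lceil r/2\rceil \text{ for all } i,j,k\in[n],\ j\neq k\}$.
   Context: $[n]=\{1,\ldots,n\}$. $\mathbb{Z}^n$ carries the Manhattan metric $d(x,y)=\sum_i|x_i-y_i|$; for $X\subseteq\mathbb{Z}^n$, $\mathrm{VR}(X;r)$ is the simplicial complex on $X$ whose simplices are finite subsets of diameter at most $r$. Let $\prec$ be the anti-lexicographic order on $\mathbb{Z}^n$: $x\prec y$ iff at the largest index $i$ with $x_i\neq y_i$ one has $x_i<y_i$. Let $V_m=\{0,\ldots,m\}^n$. Let $H$ be $V_m$ with its first $\alpha$ elements (with respect to $\prec$) removed, $\delta$ the $\prec$-least element of $H$, and $Y=\{x-\delta: x\in H\}$ (so $\mathbf{0}$ is the least element of $Y$). Then $\Gamma_n^{\alpha,r}$ is the link of $\mathbf{0}$ in $\mathrm{VR}(Y;r)$, i.e. the complex of simplices $\tau$ of $\mathrm{VR}(Y;r)$ with $\mathbf{0}\notin\tau$ and $\tau\cup\{\mathbf{0}\}\in\mathrm{VR}(Y;r)$. The induced subcomplex of $K$ on a vertex set $W$ consists of the simplices of $K$ contained in $W$. *)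

theory Defs
  imports "HOL-Analysis.Analysis"
begin

text \<open>Points of Z^n are integer lists of length n; coordinate i of [n] is list index i-1.\<close>

definition manhattan :: "int list \<Rightarrow> int list \<Rightarrow> int" where
  "manhattan x y = (\<Sum>i<length x. \<bar>x ! i - y ! i\<bar>)"

definition antilex :: "int list \<Rightarrow> int list \<Rightarrow> bool" where
  "antilex x y \<longleftrightarrow> length x = length y \<and>
     (\<exists>i<length x. x ! i < y ! i \<and> (\<forall>j. i < j \<and> j < length x \<longrightarrow> x ! j = y ! j))"

definition cube :: "nat \<Rightarrow> nat \<Rightarrow> int list set" where
  "cube n m = {x. length x = n \<and> (\<forall>i<n. 0 \<le> x ! i \<and> x ! i \<le> int m)}"

text \<open>V_m with its first alpha elements (w.r.t. antilex) removed: keep those with at least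
  alpha predecessors.\<close>
definition Hset :: "nat \<Rightarrow> nat \<Rightarrow> nat \<Rightarrow> int list set" where
  "Hset n m \<alpha> = {x \<in> cube n m. \<alpha> \<le> card {y \<in> cube n m. antilex y x}}"

definition delta :: "nat \<Rightarrow> nat \<Rightarrow> nat \<Rightarrow> int list" where
  "delta n m \<alpha> = (THE d. d \<in> Hset n m \<alpha> \<and> (\<forall>y \<in> Hset n m \<alpha>. y \<noteq> d \<longrightarrow> antilex d y))"

definition Yset :: "nat \<Rightarrow> nat \<Rightarrow> nat \<Rightarrow> int list set" where
  "Yset n m \<alpha> = (\<lambda>x. map2 (-) x (delta n m \<alpha>)) ` Hset n m \<alpha>"

definition VR :: "int list set \<Rightarrow> int \<Rightarrow> int list set set" where
  "VR X r = {\<tau>. \<tau> \<subseteq> X \<and> finite \<tau> \<and> (\<forall>x\<in>\<tau>. \<forall>y\<in>\<tau>. manhattan x y \<le> r)}"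

definition link :: "'a set set \<Rightarrow> 'a \<Rightarrow> 'a set set" where
  "link K v = {\<tau> \<in> K. v \<notin> \<tau> \<and> insert v \<tau> \<in> K}"

definition Gamma :: "nat \<Rightarrow> nat \<Rightarrow> nat \<Rightarrow> int \<Rightarrow> int list set set" where
  "Gamma n m \<alpha> r = link (VR (Yset n m \<alpha>) r) (replicate n 0)"

definition vertices :: "'a set set \<Rightarrow> 'a set" where
  "vertices K = {v. {v} \<in> K}"

definition induced :: "'a set set \<Rightarrow> 'a set \<Rightarrow> 'a set set" where
  "induced K W = {\<tau> \<in> K. \<tau> \<subseteq> W}"

text \<open>Geometric realization of a simplicial complex K (a family of finite vertex sets):
  the nonnegative functions supported on a simplex of K with total weight 1, with the
  subspace topology of the product topology (for finite complexes this is the usual one).\<close>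
definition geom_real :: "'a set set \<Rightarrow> ('a \<Rightarrow> real) topology" where
  "geom_real K = subtopology (powertop_real UNIV)
     {f. \<exists>\<sigma>\<in>K. finite \<sigma> \<and> (\<forall>v. f v \<noteq> 0 \<longrightarrow> v \<in> \<sigma>) \<and> (\<forall>v. 0 \<le> f v) \<and> sum f \<sigma> = 1}"

end

theory Submission
  imports Defs
begin

definition clq :: "('a \<Rightarrow> 'a \<Rightarrow> bool) \<Rightarrow> 'a set \<Rightarrow> 'a set set" where
  "clq A U = {\<tau>. \<tau> \<subseteq> U \<and> finite \<tau> \<and> (\<forall>a\<in>\<tau>. \<forall>b\<in>\<tau>. A a b)}"

definition SR :: "'a set set \<Rightarrow> ('a \<Rightarrow> real) set" where
  "SR K = {f. \<exists>\<sigma>\<in>K. finite \<sigma> \<and> (\<forall>v. f v \<noteq> 0 \<longrightarrow> v \<in> \<sigma>) \<and> (\<forall>v. 0 \<le> f v) \<and> sum f \<sigma> = 1}"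

lemma geom_real_SR: "geom_real K = subtopology (powertop_real UNIV) (SR K)"
  unfolding geom_real_def SR_def by simp

definition Hm :: "'a \<Rightarrow> 'a \<Rightarrow> real \<Rightarrow> ('a \<Rightarrow> real) \<Rightarrow> ('a \<Rightarrow> real)" where
  "Hm x y t f = (\<lambda>v. f v + t * f x * ((if v = y then 1 else 0) - (if v = x then 1 else 0)))"

lemma Hm_cont:
  "continuous_map (prod_topology (top_of_set {0..1}) (geom_real K)) (powertop_real UNIV)
     (\<lambda>p. Hm x y (g (fst p)) (snd p))"
  if "continuous_map euclideanreal euclideanreal g"
proof -
  have fst: "continuous_map (prod_topology (top_of_set {0..1}) (geom_real K)) euclideanreal fst"
    by (metis continuous_map_fst continuous_map_in_subtopology)
  have sndv: "continuous_map (prod_topology (top_of_set {0..1}) (geom_real K)) euclideanreal (\<lambda>p. snd p v)" for v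
  proof -
    have "continuous_map (geom_real K) euclideanreal (\<lambda>f. f v)"
      unfolding geom_real_def
      by (rule continuous_map_from_subtopology) (rule continuous_map_product_projection, simp)
    then show ?thesis
      using continuous_map_compose[OF continuous_map_snd] by (auto simp: o_def)
  qed
  have gf: "continuous_map (prod_topology (top_of_set {0..1}) (geom_real K)) euclideanreal (\<lambda>p. g (fst p))"
    using continuous_map_compose[OF fst that] by (simp add: o_def)
  show ?thesis
    unfolding continuous_map_componentwise_UNIV Hm_def
    by (intro allI continuous_intros sndv gf)
qed

lemma sum_supp:
  assumes "finite \<tau>" "\<sigma> \<subseteq> \<tau>" "\<forall>v. f v \<noteq> 0 \<longrightarrow> v \<in> \<sigma>"
  shows "sum f \<tau> = sum f \<sigma>"
  using assms by (intro sum.mono_neutral_right) auto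

lemma Hm_0: "Hm x y 0 f = f" by (simp add: Hm_def)

lemma Hm_sum:
  assumes "finite \<tau>" "x \<in> \<tau>" "y \<in> \<tau>"
  shows "sum (Hm x y t f) \<tau> = sum f \<tau>"
proof -
  have "sum (Hm x y t f) \<tau> = sum f \<tau> + t * f x * (sum (\<lambda>v. if v = y then 1 else 0) \<tau> - sum (\<lambda>v. if v = x then 1 else 0) \<tau>)"
    unfolding Hm_def by (simp add: sum.distrib sum_subtractf[symmetric] sum_distrib_left)
  also have "\<dots> = sum f \<tau>"
    using assms by (simp add: sum.delta)
  finally show ?thesis .
qed

locale domin =
  fixes A :: "'a \<Rightarrow> 'a \<Rightarrow> bool" and U :: "'a set" and x y :: 'a
  assumes xU: "x \<in> U" and yU: "y \<in> U" and xy: "x \<noteq> y"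
    and Ayy: "A y y" and Adom: "\<And>z. z \<in> U \<Longrightarrow> A x z \<Longrightarrow> A y z"
    and Adom': "\<And>z. z \<in> U \<Longrightarrow> A z x \<Longrightarrow> A z y"
    and Axy: "A x y" "A y x"
begin

lemma ins_clq:
  assumes "\<sigma> \<in> clq A U" "x \<in> \<sigma>"
  shows "insert y \<sigma> \<in> clq A U"
proof -
  have s: "\<sigma> \<subseteq> U" "finite \<sigma>" "\<And>a b. a \<in> \<sigma> \<Longrightarrow> b \<in> \<sigma> \<Longrightarrow> A a b"
    using assms(1) unfolding clq_def by auto
  have "A a b" if "a \<in> insert y \<sigma>" "b \<in> insert y \<sigma>" for a b
  proof (cases "a = y")
    case True
    show ?thesis
    proof (cases "b = y")
      case True then show ?thesis using \<open>a = y\<close> Ayy by simp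
    next
      case False then have "b \<in> \<sigma>" using that by simp
      then show ?thesis using \<open>a = y\<close> Adom s assms(2) by blast
    qed
  next
    case False then have a: "a \<in> \<sigma>" using that by simp
    show ?thesis
    proof (cases "b = y")
      case True then show ?thesis using a Adom' s assms(2) by blast
    next
      case False then have "b \<in> \<sigma>" using that by simp
      then show ?thesis using a s by blast
    qed
  qed
  then show ?thesis unfolding clq_def using s yU by auto
qed

lemma Hm_in:
  assumes f: "f \<in> SR (clq A U)" and t: "0 \<le> t" "t \<le> 1"
  shows "Hm x y t f \<in> SR (clq A U)"
proof -
  obtain \<sigma> where s: "\<sigma> \<in> clq A U" "finite \<sigma>" "\<forall>v. f v \<noteq> 0 \<longrightarrow> v \<in> \<sigma>" "\<forall>v. 0 \<le> f v" "sum f \<sigma> = 1"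
    using f unfolding SR_def by blast
  show ?thesis
  proof (cases "x \<in> \<sigma>")
    case False
    then have "f x = 0" using s by blast
    then have "Hm x y t f = f" by (simp add: Hm_def)
    then show ?thesis using f by simp
  next
    case True
    let ?\<tau> = "insert y \<sigma>"
    have tc: "?\<tau> \<in> clq A U"
      using ins_clq[OF s(1) True] .
    have sup: "\<forall>v. Hm x y t f v \<noteq> 0 \<longrightarrow> v \<in> ?\<tau>"
      using s(3) True by (auto simp: Hm_def)
    have nn: "\<forall>v. 0 \<le> Hm x y t f v"
    proof
      fix v
      show "0 \<le> Hm x y t f v"
      proof (cases "v = x")
        case True
        then have "Hm x y t f v = (1 - t) * f x" using xy by (simp add: Hm_def algebra_simps)
        then show ?thesis using s(4) t by simp
      next
        case False
        then show ?thesis using s(4) t by (auto simp: Hm_def)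
      qed
    qed
    have "sum (Hm x y t f) ?\<tau> = sum f ?\<tau>"
      using s(2) True by (intro Hm_sum) auto
    also have "\<dots> = 1" using sum_supp[of ?\<tau> \<sigma> f] s by auto
    finally have "sum (Hm x y t f) ?\<tau> = 1" .
    moreover have "finite ?\<tau>" using s(2) by simp
    ultimately show ?thesis unfolding SR_def using tc sup nn by (intro CollectI bexI[of _ "?\<tau>"]) auto
  qed
qed

lemma Hm1_in:
  assumes f: "f \<in> SR (clq A U)"
  shows "Hm x y 1 f \<in> SR (clq A (U - {x}))"
proof -
  obtain \<sigma> where s: "\<sigma> \<in> clq A U" "finite \<sigma>" "\<forall>v. f v \<noteq> 0 \<longrightarrow> v \<in> \<sigma>" "\<forall>v. 0 \<le> f v" "sum f \<sigma> = 1"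
    using f unfolding SR_def by blast
  show ?thesis
  proof (cases "x \<in> \<sigma>")
    case False
    then have "f x = 0" using s by blast
    then have e: "Hm x y 1 f = f" by (simp add: Hm_def)
    have "\<sigma> \<in> clq A (U - {x})" using s(1) False unfolding clq_def by auto
    then show ?thesis unfolding e SR_def using s by (intro CollectI bexI[of _ "\<sigma>"]) auto
  next
    case True
    let ?\<tau> = "insert y \<sigma>"
    let ?g = "Hm x y 1 f"
    have gx: "?g x = 0" using xy by (simp add: Hm_def)
    have tc: "?\<tau> - {x} \<in> clq A (U - {x})"
      using ins_clq[OF s(1) True] xy unfolding clq_def by auto
    have sup: "\<forall>v. ?g v \<noteq> 0 \<longrightarrow> v \<in> ?\<tau> - {x}"
      using s(3) True gx by (auto simp: Hm_def)
    have nn: "\<forall>v. 0 \<le> ?g v"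
      using s(4) xy by (auto simp: Hm_def)
    have "sum ?g (?\<tau> - {x}) = sum ?g ?\<tau>"
      using s(2) True gx by (simp add: sum_diff1)
    also have "\<dots> = sum f ?\<tau>"
      using s(2) True by (intro Hm_sum) auto
    also have "\<dots> = 1" using sum_supp[of ?\<tau> \<sigma> f] s by auto
    finally have "sum ?g (?\<tau> - {x}) = 1" .
    moreover have "finite (?\<tau> - {x})" using s(2) by simp
    ultimately show ?thesis unfolding SR_def using tc sup nn by (intro CollectI bexI[of _ "?\<tau> - {x}"]) auto
  qed
qed

lemma Hm_fix:
  assumes f: "f \<in> SR (clq A (U - {x}))"
  shows "Hm x y t f = f"
proof -
  obtain \<sigma> where s: "\<sigma> \<in> clq A (U - {x})" "\<forall>v. f v \<noteq> 0 \<longrightarrow> v \<in> \<sigma>"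
    using f unfolding SR_def by blast
  then have "f x = 0" unfolding clq_def by blast
  then show ?thesis by (simp add: Hm_def)
qed

lemma SR_mono: "SR (clq A (U - {x})) \<subseteq> SR (clq A U)"
  unfolding SR_def clq_def by blast

theorem domin_heq:
  "geom_real (clq A U) homotopy_equivalent_space geom_real (clq A (U - {x}))"
proof -
  let ?X = "geom_real (clq A U)" and ?X' = "geom_real (clq A (U - {x}))"
  have tX: "topspace ?X = SR (clq A U)" unfolding geom_real_SR by simp
  have tX': "topspace ?X' = SR (clq A (U - {x}))" unfolding geom_real_SR by simp
  have c1: "continuous_map (prod_topology (top_of_set {0..1}) ?X) (powertop_real UNIV)
     (\<lambda>p. Hm x y ((\<lambda>t. t) (fst p)) (snd p))"
    by (rule Hm_cont) simp
  have c2: "continuous_map (prod_topology (top_of_set {0..1}) ?X) (powertop_real UNIV)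
     (\<lambda>p. Hm x y ((\<lambda>t. 1 - t) (fst p)) (snd p))"
    by (rule Hm_cont) (intro continuous_intros)
  have R: "continuous_map ?X ?X' (Hm x y 1)"
  proof -
    have "continuous_map ?X (powertop_real UNIV) (Hm x y 1)"
    proof -
      have "continuous_map ?X (prod_topology (top_of_set {0..1::real}) ?X) (\<lambda>f. (1::real, f))"
        by (intro continuous_map_pairedI) (auto simp: continuous_map_in_subtopology continuous_map_const)
      from continuous_map_compose[OF this c1] show ?thesis by (simp add: o_def)
    qed
    then show ?thesis unfolding geom_real_SR[of "clq A (U - {x})"]
      using Hm1_in by (auto simp: continuous_map_in_subtopology tX)
  qed
  have I: "continuous_map ?X' ?X id"
  proof -
    have "continuous_map ?X' (powertop_real UNIV) id"
      unfolding geom_real_SR by (rule continuous_map_from_subtopology) simp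
    moreover have "id ` topspace ?X' \<subseteq> SR (clq A U)" using SR_mono tX' by auto
    ultimately show ?thesis unfolding geom_real_SR[of "clq A U"] continuous_map_in_subtopology by (simp add: Pi_iff subset_iff)
  qed
  have h1: "homotopic_with (\<lambda>x. True) ?X ?X (id \<circ> Hm x y 1) id"
    unfolding homotopic_with_def
  proof (intro exI conjI allI ballI)
    let ?h = "\<lambda>p. Hm x y (1 - fst p) (snd p)"
    show "continuous_map (prod_topology (top_of_set {0..1}) ?X) ?X ?h"
    proof -
      have "?h ` topspace (prod_topology (top_of_set {0..1}) ?X) \<subseteq> SR (clq A U)"
      proof
        fix g assume "g \<in> ?h ` topspace (prod_topology (top_of_set {0..1}) ?X)"
        then obtain t f where tf: "t \<in> {0..1::real}" "f \<in> SR (clq A U)" "g = Hm x y (1 - t) f"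
          unfolding topspace_prod_topology tX by auto
        then show "g \<in> SR (clq A U)" using Hm_in[of f "1 - t"] by simp
      qed
      moreover have "continuous_map (prod_topology (top_of_set {0..1}) ?X) (powertop_real UNIV) ?h"
        using c2 by simp
      ultimately show ?thesis
        unfolding geom_real_SR[of "clq A U"] continuous_map_in_subtopology
        by (simp add: image_subset_iff Pi_iff geom_real_SR)
    qed
    show "?h (0, f) = (id \<circ> Hm x y 1) f" for f by simp
    show "?h (1, f) = id f" for f by (simp add: Hm_0)
  qed auto
  have RI: "continuous_map ?X' ?X' (Hm x y 1 \<circ> id)"
    using continuous_map_compose[OF I R] .
  have h2: "homotopic_with (\<lambda>x. True) ?X' ?X' (Hm x y 1 \<circ> id) id"
  proof (rule homotopic_with_equal)
    show "(Hm x y 1 \<circ> id) f = id f" if "f \<in> topspace ?X'" for f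
      using that Hm_fix tX' by simp
  qed (use RI in auto)
  show ?thesis unfolding homotopy_equivalent_space_def
    using R I h1 h2 by blast
qed

end

definition good :: "('a \<Rightarrow> nat) \<Rightarrow> 'a set \<Rightarrow> 'a set \<Rightarrow> 'a set \<Rightarrow> bool" where
  "good \<rho> W N U \<longleftrightarrow> W \<subseteq> U \<and> U \<subseteq> N \<and> (\<forall>u\<in>U. \<forall>v\<in>N. \<rho> v < \<rho> u \<longrightarrow> v \<in> U)"

lemma rank_reduce:
  fixes \<rho> :: "'a \<Rightarrow> nat"
  assumes fin: "finite N" and WN: "W \<subseteq> N"
    and r0: "\<And>w. w \<in> W \<Longrightarrow> \<rho> w = 0" and rpos: "\<And>x. x \<in> N \<Longrightarrow> x \<notin> W \<Longrightarrow> 0 < \<rho> x"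
    and sym: "\<And>a b. a \<in> N \<Longrightarrow> b \<in> N \<Longrightarrow> A a b \<Longrightarrow> A b a"
    and refl: "\<And>a. a \<in> N \<Longrightarrow> A a a"
    and dom: "\<And>x. x \<in> N \<Longrightarrow> x \<notin> W \<Longrightarrow> \<exists>y\<in>N. \<rho> y < \<rho> x \<and> (\<forall>z\<in>N. \<rho> z \<le> \<rho> x \<longrightarrow> A x z \<longrightarrow> A y z)"
  shows "geom_real (clq A N) homotopy_equivalent_space geom_real (clq A W)"
proof -
  have main: "\<And>U. card (U - W) = k \<Longrightarrow> good \<rho> W N U \<Longrightarrow>
      geom_real (clq A U) homotopy_equivalent_space geom_real (clq A W)" for k
  proof (induction k rule: less_induct)
    case (less k U)
    have WU: "W \<subseteq> U" and UN: "U \<subseteq> N" and dc: "\<And>u v. u \<in> U \<Longrightarrow> v \<in> N \<Longrightarrow> \<rho> v < \<rho> u \<Longrightarrow> v \<in> U"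
      using less.prems(2) unfolding good_def by auto
    have finU: "finite U" using UN fin finite_subset by blast
    show ?case
    proof (cases "U - W = {}")
      case True
      then have "U = W" using WU by blast
      then show ?thesis by (simp add: homotopy_equivalent_space_refl)
    next
      case False
      define M where "M = Max (\<rho> ` (U - W))"
      have finUW: "finite (U - W)" using finU by simp
      have "M \<in> \<rho> ` (U - W)" unfolding M_def using False finUW by (intro Max_in) auto
      then obtain x where x: "x \<in> U" "x \<notin> W" "\<rho> x = M" by auto
      have xN: "x \<in> N" using x UN by auto
      have maxx: "\<rho> z \<le> \<rho> x" if "z \<in> U" for z
      proof (cases "z \<in> W")
        case True then show ?thesis using r0 by simp
      next
        case False then show ?thesis using that x(3) finUW unfolding M_def by (simp add: Max_ge)
      qed
      obtain y where y: "y \<in> N" "\<rho> y < \<rho> x" and yd: "\<And>z. z \<in> N \<Longrightarrow> \<rho> z \<le> \<rho> x \<Longrightarrow> A x z \<Longrightarrow> A y z"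
        using dom[OF xN x(2)] by blast
      have yU: "y \<in> U" using dc[OF x(1) y(1) y(2)] .
      have xy: "x \<noteq> y" using y(2) by auto
      have Ayx: "A y x" using yd[OF xN le_refl refl[OF xN]] .
      interpret domin A U x y
      proof
        show "x \<in> U" "y \<in> U" "x \<noteq> y" by fact+
        show "A y y" using refl y(1) by blast
        show "A y z" if "z \<in> U" "A x z" for z using yd[of z] that UN maxx by blast
        show "A z y" if "z \<in> U" "A z x" for z
        proof -
          have zN: "z \<in> N" using that UN by blast
          have "A x z" using sym[OF zN xN that(2)] .
          then have "A y z" using yd[of z] zN maxx that(1) by blast
          then show ?thesis using sym y(1) zN by blast
        qed
        show "A x y" using sym[OF y(1) xN Ayx] .
        show "A y x" by fact
      qed
      have h1: "geom_real (clq A U) homotopy_equivalent_space geom_real (clq A (U - {x}))"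
        by (rule domin_heq)
      have g2: "good \<rho> W N (U - {x})"
      proof -
        have "v \<in> U - {x}" if "u \<in> U - {x}" "v \<in> N" "\<rho> v < \<rho> u" for u v
        proof -
          have "v \<in> U" using dc[of u v] that by blast
          moreover have "\<rho> u \<le> \<rho> x" using maxx that(1) by blast
          ultimately show ?thesis using that(3) by auto
        qed
        then show ?thesis unfolding good_def using WU UN x(2) by blast
      qed
      have c2: "card ((U - {x}) - W) < k"
      proof -
        have "(U - {x}) - W = (U - W) - {x}" by blast
        moreover have "x \<in> U - W" using x by blast
        ultimately show ?thesis using less.prems(1) finUW card_Diff1_less by metis
      qed
      have h2: "geom_real (clq A (U - {x})) homotopy_equivalent_space geom_real (clq A W)"
        using less.IH[OF c2 HOL.refl g2] .
      show ?thesis using homotopy_eqv_trans[OF h1 h2] .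
    qed
  qed
  have "good \<rho> W N N" unfolding good_def using WN by auto
  then show ?thesis using main by blast
qed

definition nrm :: "int list \<Rightarrow> int" where
  "nrm x = (\<Sum>i<length x. \<bar>x ! i\<bar>)"

definition step :: "nat set \<Rightarrow> int list \<Rightarrow> int list" where
  "step S x = map (\<lambda>k. if k \<in> S then x ! k - sgn (x ! k) else x ! k) [0..<length x]"

lemma length_step[simp]: "length (step S x) = length x"
  by (simp add: step_def)

lemma nth_step: "k < length x \<Longrightarrow> step S x ! k = (if k \<in> S then x ! k - sgn (x ! k) else x ! k)"
  by (simp add: step_def)

lemma coord:
  fixes a b :: int
  assumes "a \<noteq> 0"
  shows "\<bar>(a - sgn a) - b\<bar> = \<bar>a - b\<bar> - 1 \<or> (\<bar>(a - sgn a) - b\<bar> = \<bar>a - b\<bar> + 1 \<and> \<bar>a - b\<bar> = \<bar>b\<bar> - \<bar>a\<bar>)"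
  using assms by (cases "a > 0") (auto simp: sgn_if abs_if)

lemma coord_abs: "(a::int) \<noteq> 0 \<Longrightarrow> \<bar>a - sgn a\<bar> = \<bar>a\<bar> - 1"
  by (auto simp: sgn_if abs_if)

lemma manh_step:
  assumes "length x = n" "S \<subseteq> {..<n}"
  shows "manhattan (step S x) z = manhattan x z + (\<Sum>k\<in>S. \<bar>step S x ! k - z ! k\<bar> - \<bar>x ! k - z ! k\<bar>)"
proof -
  have fS: "finite S" using assms(2) finite_subset by blast
  have "manhattan (step S x) z - manhattan x z = (\<Sum>k<n. \<bar>step S x ! k - z ! k\<bar> - \<bar>x ! k - z ! k\<bar>)"
    using assms(1) by (simp add: manhattan_def sum_subtractf)
  also have "\<dots> = (\<Sum>k\<in>S. \<bar>step S x ! k - z ! k\<bar> - \<bar>x ! k - z ! k\<bar>)"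
    using assms by (intro sum.mono_neutral_right) (auto simp: nth_step)
  finally show ?thesis by simp
qed

lemma nrm_step:
  assumes "length x = n" "S \<subseteq> {..<n}" "\<And>k. k \<in> S \<Longrightarrow> x ! k \<noteq> 0"
  shows "nrm (step S x) = nrm x - int (card S)"
proof -
  have "nrm (step S x) - nrm x = (\<Sum>k<n. \<bar>step S x ! k\<bar> - \<bar>x ! k\<bar>)"
    using assms(1) by (simp add: nrm_def sum_subtractf)
  also have "\<dots> = (\<Sum>k\<in>S. \<bar>step S x ! k\<bar> - \<bar>x ! k\<bar>)"
    using assms by (intro sum.mono_neutral_right) (auto simp: nth_step)
  also have "\<dots> = (\<Sum>k\<in>S. - 1)"
    using assms by (intro sum.cong) (auto simp: nth_step coord_abs)
  finally show ?thesis by simp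
qed

lemma beyond_bound:
  assumes "length x = n" "length z = n" "B \<subseteq> {..<n}"
    "\<And>k. k \<in> B \<Longrightarrow> \<bar>x ! k - z ! k\<bar> = \<bar>z ! k\<bar> - \<bar>x ! k\<bar>"
  shows "manhattan x z \<le> nrm x + nrm z - 2 * (\<Sum>k\<in>B. \<bar>x ! k\<bar>)"
proof -
  have fB: "finite B" using assms(3) finite_subset by blast
  have "manhattan x z = (\<Sum>k<n. \<bar>x ! k - z ! k\<bar>)" using assms by (simp add: manhattan_def)
  also have "\<dots> \<le> (\<Sum>k<n. \<bar>x ! k\<bar> + \<bar>z ! k\<bar> - (if k \<in> B then 2 * \<bar>x ! k\<bar> else 0))"
    using assms(4) by (intro sum_mono) auto
  also have "\<dots> = nrm x + nrm z - (\<Sum>k<n. (if k \<in> B then 2 * \<bar>x ! k\<bar> else 0))"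
    using assms by (simp add: nrm_def sum_subtractf sum.distrib)
  also have "(\<Sum>k<n. (if k \<in> B then 2 * \<bar>x ! k\<bar> else 0)) = (\<Sum>k\<in>B. 2 * \<bar>x ! k\<bar>)"
    using assms(3) by (simp add: sum.If_cases Int_absorb1 inf.absorb2)
  finally show ?thesis by (simp add: sum_distrib_left)
qed

lemma parity:
  assumes "length x = n" "length z = n"
  shows "even (manhattan x z + nrm x + nrm z)"
proof -
  have "manhattan x z + nrm x + nrm z = (\<Sum>k<n. \<bar>x ! k - z ! k\<bar> + \<bar>x ! k\<bar> + \<bar>z ! k\<bar>)"
    using assms by (simp add: manhattan_def nrm_def sum.distrib)
  also have "even \<dots>"
  proof (intro dvd_sum)
    fix k
    show "even (\<bar>x ! k - z ! k\<bar> + \<bar>x ! k\<bar> + \<bar>z ! k\<bar>)"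
      by (auto simp: abs_if)
  qed
  finally show ?thesis .
qed

lemma manh_sym: "length x = length z \<Longrightarrow> manhattan x z = manhattan z x"
  unfolding manhattan_def by (simp add: abs_minus_commute)

definition pos :: "int list \<Rightarrow> bool" where
  "pos x \<longleftrightarrow> (\<exists>L<length x. 0 < x ! L \<and> (\<forall>j. L < j \<and> j < length x \<longrightarrow> x ! j = 0))"

definition btw :: "int list \<Rightarrow> int list \<Rightarrow> bool" where
  "btw y x \<longleftrightarrow> length y = length x \<and>
     (\<forall>k<length x. (0 \<le> y ! k \<and> y ! k \<le> x ! k) \<or> (x ! k \<le> y ! k \<and> y ! k \<le> 0))"

definition Wsh :: "int \<Rightarrow> int list \<Rightarrow> bool" where
  "Wsh r x \<longleftrightarrow> (\<forall>i<length x. \<bar>x ! i\<bar> < r div 2) \<and>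
     (\<forall>j<length x. \<forall>k<length x. j \<noteq> k \<longrightarrow> \<bar>x ! j\<bar> + \<bar>x ! k\<bar> \<le> r - r div 2)"

definition Pst :: "int \<Rightarrow> int list \<Rightarrow> bool" where
  "Pst r x \<longleftrightarrow> odd r \<and> nrm x = r \<and>
     (\<exists>i<length x. \<bar>x ! i\<bar> = r div 2 \<and> (\<forall>j<length x. j \<noteq> i \<longrightarrow> \<bar>x ! j\<bar> \<le> 1))"

definition domg :: "int \<Rightarrow> int list \<Rightarrow> int list \<Rightarrow> bool" where
  "domg r x y \<longleftrightarrow> pos y \<and> btw y x \<and> nrm y < nrm x \<and>
     (\<forall>z. length z = length x \<longrightarrow> nrm z \<le> r \<longrightarrow> manhattan x z \<le> r \<longrightarrow> manhattan y z \<le> r)"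

lemma btw_step: "btw (step S x) x"
  unfolding btw_def by (auto simp: nth_step sgn_if)

lemma pos_step:
  assumes "L < length x" "0 < x ! L" "\<forall>j. L < j \<and> j < length x \<longrightarrow> x ! j = 0"
    "L \<in> S \<Longrightarrow> 2 \<le> x ! L"
  shows "pos (step S x)"
  unfolding pos_def
proof (intro exI[of _ L] conjI allI impI)
  show "L < length (step S x)" using assms by simp
  show "0 < step S x ! L" using assms by (auto simp: nth_step sgn_if)
  show "step S x ! j = 0" if "L < j \<and> j < length (step S x)" for j
    using assms that by (auto simp: nth_step)
qed

lemma S1:
  assumes len: "length x = n" and L: "L < n" "0 < x ! L" "\<forall>j. L < j \<and> j < n \<longrightarrow> x ! j = 0"
    and i: "i < n" "x ! i \<noteq> 0" "\<not> (i = L \<and> x ! L = 1)"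
    and big: "nrm x < 2 * \<bar>x ! i\<bar>"
  shows "domg r x (step {i} x)"
proof -
  let ?y = "step {i} x"
  have p: "pos ?y" using L i len by (intro pos_step[of L]) auto
  have ny: "nrm ?y = nrm x - 1" using nrm_step[of x n "{i}"] len i by simp
  have d: "manhattan ?y z \<le> r" if z: "length z = n" "nrm z \<le> r" "manhattan x z \<le> r" for z
  proof -
    have m: "manhattan ?y z = manhattan x z + (\<bar>(x ! i - sgn (x ! i)) - z ! i\<bar> - \<bar>x ! i - z ! i\<bar>)"
      using manh_step[of x n "{i}" z] len i by (simp add: nth_step)
    from coord[OF i(2), of "z ! i"]
    show ?thesis
    proof
      assume "\<bar>x ! i - sgn (x ! i) - z ! i\<bar> = \<bar>x ! i - z ! i\<bar> - 1"
      then show ?thesis using m z by simp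
    next
      assume a: "\<bar>x ! i - sgn (x ! i) - z ! i\<bar> = \<bar>x ! i - z ! i\<bar> + 1 \<and> \<bar>x ! i - z ! i\<bar> = \<bar>z ! i\<bar> - \<bar>x ! i\<bar>"
      have "manhattan x z \<le> nrm x + nrm z - 2 * (\<Sum>k\<in>{i}. \<bar>x ! k\<bar>)"
        using a len z i by (intro beyond_bound) auto
      then show ?thesis using m a z big by simp
    qed
  qed
  show ?thesis unfolding domg_def using p ny d btw_step len by auto
qed

lemma S2:
  assumes len: "length x = n" and L: "L < n" "0 < x ! L" "\<forall>j. L < j \<and> j < n \<longrightarrow> x ! j = 0"
    and i: "i < n" "x ! i \<noteq> 0" "\<not> (i = L \<and> x ! L = 1)"
    and j: "j < n" "x ! j \<noteq> 0" "\<not> (j = L \<and> x ! L = 1)"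
    and ij: "i \<noteq> j"
    and big: "nrm x + 2 \<le> 2 * (\<bar>x ! i\<bar> + \<bar>x ! j\<bar>)"
  shows "domg r x (step {i, j} x)"
proof -
  let ?y = "step {i, j} x"
  have p: "pos ?y" using L i j len by (intro pos_step[of L]) auto
  have ny: "nrm ?y = nrm x - 2" using nrm_step[of x n "{i, j}"] len i j ij by auto
  have d: "manhattan ?y z \<le> r" if z: "length z = n" "nrm z \<le> r" "manhattan x z \<le> r" for z
  proof -
    define di where "di = \<bar>(x ! i - sgn (x ! i)) - z ! i\<bar> - \<bar>x ! i - z ! i\<bar>"
    define dj where "dj = \<bar>(x ! j - sgn (x ! j)) - z ! j\<bar> - \<bar>x ! j - z ! j\<bar>"
    have m: "manhattan ?y z = manhattan x z + di + dj"
      using manh_step[of x n "{i, j}" z] len i j ij by (simp add: nth_step di_def dj_def)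
    have ci: "di = - 1 \<or> (di = 1 \<and> \<bar>x ! i - z ! i\<bar> = \<bar>z ! i\<bar> - \<bar>x ! i\<bar>)"
      using coord[OF i(2), of "z ! i"] unfolding di_def by auto
    have cj: "dj = - 1 \<or> (dj = 1 \<and> \<bar>x ! j - z ! j\<bar> = \<bar>z ! j\<bar> - \<bar>x ! j\<bar>)"
      using coord[OF j(2), of "z ! j"] unfolding dj_def by auto
    show ?thesis
    proof (cases "di = 1 \<and> dj = 1")
      case True
      then have a: "\<bar>x ! i - z ! i\<bar> = \<bar>z ! i\<bar> - \<bar>x ! i\<bar>" "\<bar>x ! j - z ! j\<bar> = \<bar>z ! j\<bar> - \<bar>x ! j\<bar>"
        using ci cj by auto
      have "manhattan x z \<le> nrm x + nrm z - 2 * (\<Sum>k\<in>{i, j}. \<bar>x ! k\<bar>)"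
        using a len z i j by (intro beyond_bound) auto
      then show ?thesis using m True z big ij by simp
    next
      case False
      then have "di + dj \<le> 0" using ci cj by auto
      then show ?thesis using m z by simp
    qed
  qed
  show ?thesis unfolding domg_def using p ny d btw_step len by auto
qed


lemma sum_delta_le1: "(\<Sum>k\<in>A. (if k = L then 1 else 0::int)) \<le> 1"
proof (cases "finite A")
  case True then show ?thesis by (simp add: sum.delta)
qed simp

lemma nrm_split:
  assumes "length x = n" "i < n"
  shows "nrm x = \<bar>x ! i\<bar> + (\<Sum>k\<in>{..<n} - {i}. \<bar>x ! k\<bar>)"
  using assms unfolding nrm_def by (simp add: sum.remove)

lemma comb_dom:
  assumes len: "length x = n" and p: "pos x" and nx: "nrm x \<le> r" and r4: "4 \<le> r"
    and nW: "\<not> Wsh r x" and nP: "\<not> Pst r x"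
  shows "\<exists>y. domg r x y"
proof -
  obtain L where L: "L < n" "0 < x ! L" "\<forall>j. L < j \<and> j < n \<longrightarrow> x ! j = 0"
    using p len unfolding pos_def by auto
  define f where "f = r div 2"
  have f: "2 * f \<le> r" "r \<le> 2 * f + 1" "2 \<le> f" using r4 unfolding f_def by auto
  define mov where "mov k \<longleftrightarrow> k < n \<and> x ! k \<noteq> 0 \<and> \<not> (k = L \<and> x ! L = 1)" for k
  have s1: "\<exists>y. domg r x y" if "mov i" "nrm x < 2 * \<bar>x ! i\<bar>" for i
    using S1[OF len L, of i] that unfolding mov_def by blast
  have s2: "\<exists>y. domg r x y" if "mov i" "mov j" "i \<noteq> j" "nrm x + 2 \<le> 2 * (\<bar>x ! i\<bar> + \<bar>x ! j\<bar>)" for i j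
    using S2[OF len L, of i j] that unfolding mov_def by blast
  show ?thesis
  proof (cases "\<exists>i<n. f \<le> \<bar>x ! i\<bar>")
    case True
    then obtain i where i: "i < n" "f \<le> \<bar>x ! i\<bar>" by blast
    have mi: "mov i" using i f L unfolding mov_def by auto
    show ?thesis
    proof (rule ccontr)
      assume no: "\<nexists>y. domg r x y"
      have a: "2 * \<bar>x ! i\<bar> \<le> nrm x" using s1[OF mi] no by force
      have b: "2 * (\<bar>x ! i\<bar> + \<bar>x ! j\<bar>) \<le> nrm x + 1" if "mov j" "j \<noteq> i" for j
        using s2[OF mi that(1)] that(2) no by force
      have c: "\<bar>x ! j\<bar> \<le> 1" if "j < n" "j \<noteq> i" for j
      proof (cases "mov j")
        case True
        have "2 * \<bar>x ! i\<bar> + 2 * \<bar>x ! j\<bar> \<le> nrm x + 1" using b[OF True that(2)] by (simp add: algebra_simps)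
        then show ?thesis using nx f i by linarith
      next
        case False
        then show ?thesis using that unfolding mov_def by auto
      qed
      have ns: "nrm x = \<bar>x ! i\<bar> + (\<Sum>k\<in>{..<n} - {i}. \<bar>x ! k\<bar>)"
        using nrm_split[OF len i(1)] .
      show False
      proof (cases "2 * \<bar>x ! i\<bar> + 1 \<le> nrm x")
        case True
        then have "\<bar>x ! i\<bar> = f" "nrm x = r" "r = 2 * f + 1" using f nx i by linarith+
        then have o: "odd r" by presburger
        have xi: "\<bar>x ! i\<bar> = r div 2" using \<open>\<bar>x ! i\<bar> = f\<close> f_def by simp
        have "Pst r x"
          unfolding Pst_def using o xi i(1) len c \<open>nrm x = r\<close> by blast
        then show False using nP by simp
      next
        case False
        then have e: "nrm x = 2 * \<bar>x ! i\<bar>" using a by linarith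
        have "\<exists>j. mov j \<and> j \<noteq> i"
        proof (rule ccontr)
          assume "\<nexists>j. mov j \<and> j \<noteq> i"
          then have nm: "\<not> mov k" if "k \<noteq> i" for k using that by blast
          have "\<bar>x ! k\<bar> \<le> (if k = L then 1 else 0)" if "k \<in> {..<n} - {i}" for k
          proof (cases "k = L")
            case True then show ?thesis using that c by simp
          next
            case False
            then have "x ! k = 0" using nm[of k] that unfolding mov_def by blast
            then show ?thesis using False by simp
          qed
          then have "(\<Sum>k\<in>{..<n} - {i}. \<bar>x ! k\<bar>) \<le> (\<Sum>k\<in>{..<n} - {i}. (if k = L then 1 else 0))"
            by (intro sum_mono) auto
          also have "\<dots> \<le> 1" by (rule sum_delta_le1)
          finally show False using ns e i f by linarith
        qed
        then obtain j where j: "mov j" "j \<noteq> i" by blast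
        have "1 \<le> \<bar>x ! j\<bar>" using j unfolding mov_def by auto
        moreover have "2 * \<bar>x ! i\<bar> + 2 * \<bar>x ! j\<bar> \<le> nrm x + 1"
          using b[OF j] by (simp add: algebra_simps)
        ultimately show False using e by linarith
      qed
    qed
  next
    case False
    then have sm: "\<bar>x ! k\<bar> < f" if "k < n" for k using that by auto
    have "\<not> (\<forall>j<n. \<forall>k<n. j \<noteq> k \<longrightarrow> \<bar>x ! j\<bar> + \<bar>x ! k\<bar> \<le> r - f)"
      using nW sm len unfolding Wsh_def f_def by blast
    then obtain j k where jk: "j < n" "k < n" "j \<noteq> k" "r - f < \<bar>x ! j\<bar> + \<bar>x ! k\<bar>"
      by (auto simp: not_le)
    have "2 \<le> \<bar>x ! j\<bar>" "2 \<le> \<bar>x ! k\<bar>" using jk sm[of j] sm[of k] f by linarith+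
    then have "mov j" "mov k" using jk unfolding mov_def by auto
    moreover have "nrm x + 2 \<le> 2 * (\<bar>x ! j\<bar> + \<bar>x ! k\<bar>)"
    proof -
      have "nrm x + 2 \<le> 2 * \<bar>x ! j\<bar> + 2 * \<bar>x ! k\<bar>" using jk f nx by linarith
      then show ?thesis by (simp add: algebra_simps)
    qed
    ultimately show ?thesis using s2 jk(3) by blast
  qed
qed

lemma pst_dom:
  assumes len: "length x = n" and p: "pos x" and r4: "4 \<le> r" and P: "Pst r x"
  shows "\<exists>y. pos y \<and> btw y x \<and> Wsh r y \<and>
     (\<forall>z. length z = n \<longrightarrow> (Wsh r z \<or> Pst r z) \<longrightarrow> manhattan x z \<le> r \<longrightarrow> manhattan y z \<le> r)"
proof -
  obtain L where L: "L < n" "0 < x ! L" "\<forall>j. L < j \<and> j < n \<longrightarrow> x ! j = 0"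
    using p len unfolding pos_def by auto
  define f where "f = r div 2"
  have f: "r = 2 * f + 1" "2 \<le> f" using r4 P unfolding f_def Pst_def by auto
  obtain i where i: "i < n" "\<bar>x ! i\<bar> = f" and o1: "\<And>j. j < n \<Longrightarrow> j \<noteq> i \<Longrightarrow> \<bar>x ! j\<bar> \<le> 1"
    using P len unfolding Pst_def f_def by auto
  have nx: "nrm x = r" using P unfolding Pst_def by simp
  let ?y = "step {i} x"
  have xi0: "x ! i \<noteq> 0" using i f by auto
  have py: "pos ?y" using L i len f by (intro pos_step[of L]) auto
  have yi: "\<bar>?y ! i\<bar> = f - 1" using i xi0 len by (simp add: nth_step coord_abs)
  have yj: "\<bar>?y ! j\<bar> \<le> 1" if "j < n" "j \<noteq> i" for j using that o1 len by (simp add: nth_step)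
  have wy: "Wsh r ?y"
    unfolding Wsh_def
  proof (intro conjI allI impI)
    fix k assume "k < length ?y"
    then show "\<bar>?y ! k\<bar> < r div 2" using yi yj[of k] f len unfolding f_def[symmetric]
      by (cases "k = i") auto
  next
    fix j k assume jk: "j < length ?y" "k < length ?y" "j \<noteq> k"
    show "\<bar>?y ! j\<bar> + \<bar>?y ! k\<bar> \<le> r - r div 2"
      using yi yj[of j] yj[of k] f len jk unfolding f_def[symmetric]
      by (cases "j = i"; cases "k = i") auto
  qed
  have d: "manhattan ?y z \<le> r" if z: "length z = n" "Wsh r z \<or> Pst r z" "manhattan x z \<le> r" for z
  proof -
    have m: "manhattan ?y z = manhattan x z + (\<bar>(x ! i - sgn (x ! i)) - z ! i\<bar> - \<bar>x ! i - z ! i\<bar>)"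
      using manh_step[of x n "{i}" z] len i by (simp add: nth_step)
    from coord[OF xi0, of "z ! i"]
    show ?thesis
    proof
      assume "\<bar>x ! i - sgn (x ! i) - z ! i\<bar> = \<bar>x ! i - z ! i\<bar> - 1"
      then show ?thesis using m z by simp
    next
      assume a: "\<bar>x ! i - sgn (x ! i) - z ! i\<bar> = \<bar>x ! i - z ! i\<bar> + 1 \<and> \<bar>x ! i - z ! i\<bar> = \<bar>z ! i\<bar> - \<bar>x ! i\<bar>"
      then have "f \<le> \<bar>z ! i\<bar>" using i by auto
      then have "\<not> Wsh r z" unfolding Wsh_def f_def using z(1) i by force
      then have "Pst r z" using z by blast
      then have nz: "nrm z = r" unfolding Pst_def by simp
      have "even (manhattan x z + nrm x + nrm z)" using parity[OF len z(1)] .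
      then have "even (manhattan x z)" using nx nz by simp
      then have "manhattan x z \<le> r - 1" using z(3) f by presburger
      then show ?thesis using m a by simp
    qed
  qed
  show ?thesis using py btw_step wy d by blast
qed

lemma antilex_irrefl: "\<not> antilex x x"
  unfolding antilex_def by auto

lemma antilex_trans:
  assumes "antilex x y" "antilex y z" shows "antilex x z"
proof -
  obtain i where i: "i < length x" "x ! i < y ! i" "\<forall>j. i < j \<and> j < length x \<longrightarrow> x ! j = y ! j"
    and l1: "length x = length y" using assms(1) unfolding antilex_def by blast
  obtain k where k: "k < length y" "y ! k < z ! k" "\<forall>j. k < j \<and> j < length y \<longrightarrow> y ! j = z ! j"
    and l2: "length y = length z" using assms(2) unfolding antilex_def by blast
  show ?thesis
  proof (cases "i < k")
    case True
    then show ?thesis unfolding antilex_def using i k l1 l2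
      by (intro conjI exI[of _ k]) auto
  next
    case False
    show ?thesis
    proof (cases "k < i")
      case True
      then show ?thesis unfolding antilex_def using i k l1 l2
        by (intro conjI exI[of _ i]) auto
    next
      case False
      then have "i = k" using \<open>\<not> i < k\<close> by simp
      then show ?thesis unfolding antilex_def using i k l1 l2
        by (intro conjI exI[of _ i]) auto
    qed
  qed
qed

lemma antilex_asym: "antilex x y \<Longrightarrow> \<not> antilex y x"
  using antilex_trans antilex_irrefl by blast

lemma antilex_total:
  assumes "length x = length y" "x \<noteq> y"
  shows "antilex x y \<or> antilex y x"
proof -
  let ?D = "{k. k < length x \<and> x ! k \<noteq> y ! k}"
  have ne: "?D \<noteq> {}" using assms nth_equalityI by blast
  have fin: "finite ?D" by simp
  define i where "i = Max ?D"
  have iD: "i \<in> ?D" unfolding i_def using Max_in[OF fin ne] .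
  have above: "x ! j = y ! j" if "i < j" "j < length x" for j
  proof (rule ccontr)
    assume "x ! j \<noteq> y ! j"
    then have "j \<in> ?D" using that by simp
    then have "j \<le> i" unfolding i_def using fin by simp
    then show False using that by simp
  qed
  show ?thesis
  proof (cases "x ! i < y ! i")
    case True
    then show ?thesis unfolding antilex_def using assms iD above by blast
  next
    case False
    then have "y ! i < x ! i" using iD by auto
    then show ?thesis unfolding antilex_def using assms iD above by (metis mem_Collect_eq)
  qed
qed

lemma cube_alt: "cube n m = {xs. set xs \<subseteq> {0..int m} \<and> length xs = n}"
  unfolding cube_def by (auto simp: in_set_conv_nth subset_iff)

lemma finite_cube: "finite (cube n m)"
  unfolding cube_alt by (rule finite_lists_length_eq) simp

lemma card_cube: "card (cube n m) = (m + 1) ^ n"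
  unfolding cube_alt by (simp add: card_lists_length_eq nat_add_distrib)

definition cnt :: "nat \<Rightarrow> nat \<Rightarrow> int list \<Rightarrow> nat" where
  "cnt n m x = card {y \<in> cube n m. antilex y x}"

lemma cnt_mono:
  assumes "antilex x y" "x \<in> cube n m"
  shows "cnt n m x < cnt n m y"
  unfolding cnt_def
proof (rule psubset_card_mono)
  show "finite {y' \<in> cube n m. antilex y' y}" using finite_cube by simp
  show "{y \<in> cube n m. antilex y x} \<subset> {y' \<in> cube n m. antilex y' y}"
    using assms antilex_trans antilex_irrefl by blast
qed

lemma Hset_cnt: "Hset n m \<alpha> = {x \<in> cube n m. \<alpha> \<le> cnt n m x}"
  unfolding Hset_def cnt_def by simp

lemma top_in:
  assumes "\<alpha> < (m + 1) ^ n"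
  shows "replicate n (int m) \<in> Hset n m \<alpha>"
proof -
  let ?t = "replicate n (int m)"
  have tc: "?t \<in> cube n m" unfolding cube_def by auto
  have "{y \<in> cube n m. antilex y ?t} = cube n m - {?t}"
  proof (intro equalityI subsetI)
    fix y assume "y \<in> {y \<in> cube n m. antilex y ?t}"
    then show "y \<in> cube n m - {?t}" using antilex_irrefl by auto
  next
    fix y assume y: "y \<in> cube n m - {?t}"
    then have "length y = length ?t" unfolding cube_def by auto
    moreover have "\<not> antilex ?t y" using y unfolding antilex_def cube_def by auto
    ultimately show "y \<in> {y \<in> cube n m. antilex y ?t}"
      using antilex_total[of y ?t] y by auto
  qed
  then have "cnt n m ?t = (m + 1) ^ n - 1"
    unfolding cnt_def using tc finite_cube card_cube by (simp add: card_Diff_singleton)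
  then show ?thesis unfolding Hset_cnt using tc assms by simp
qed

lemma delta_prop:
  assumes "\<alpha> < (m + 1) ^ n"
  shows "delta n m \<alpha> \<in> Hset n m \<alpha> \<and> (\<forall>y \<in> Hset n m \<alpha>. y \<noteq> delta n m \<alpha> \<longrightarrow> antilex (delta n m \<alpha>) y)"
proof -
  let ?H = "Hset n m \<alpha>"
  let ?P = "\<lambda>d. d \<in> ?H \<and> (\<forall>y \<in> ?H. y \<noteq> d \<longrightarrow> antilex d y)"
  have fH: "finite ?H" using finite_cube unfolding Hset_def by simp
  have neH: "?H \<noteq> {}" using top_in[OF assms] by blast
  define c where "c = Min (cnt n m ` ?H)"
  have "c \<in> cnt n m ` ?H" unfolding c_def using fH neH by simp
  then obtain d where d1: "d \<in> ?H" and dc: "cnt n m d = c" by blast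
  have d2: "cnt n m d \<le> cnt n m y" if "y \<in> ?H" for y
  proof -
    have "c \<le> cnt n m y" unfolding c_def using fH that by simp
    then show ?thesis using dc by simp
  qed
  have Pd: "?P d"
  proof (intro conjI ballI impI)
    show "d \<in> ?H" by fact
    fix y assume y: "y \<in> ?H" "y \<noteq> d"
    have "length y = length d" using y(1) d1 unfolding Hset_def cube_def by auto
    then have "antilex d y \<or> antilex y d" using antilex_total[of d y] y(2) by auto
    moreover have "\<not> antilex y d"
    proof
      assume "antilex y d"
      moreover have "y \<in> cube n m" using y(1) unfolding Hset_def by simp
      ultimately have "cnt n m y < cnt n m d" by (rule cnt_mono)
      then show False using d2[OF y(1)] by simp
    qed
    ultimately show "antilex d y" by blast
  qed
  have uniq: "e = d" if "?P e" for e
  proof (rule ccontr)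
    assume ne: "e \<noteq> d"
    have eH: "e \<in> ?H" and eall: "\<And>y. y \<in> ?H \<Longrightarrow> y \<noteq> e \<Longrightarrow> antilex e y" using that by auto
    have dall: "\<And>y. y \<in> ?H \<Longrightarrow> y \<noteq> d \<Longrightarrow> antilex d y" using Pd by auto
    have "antilex e d" using eall[OF d1] ne by simp
    moreover have "antilex d e" using dall[OF eH] ne by simp
    ultimately show False using antilex_asym by blast
  qed
  have "?P (THE d. ?P d)"
    by (rule theI[of ?P d, OF Pd uniq])
  then show ?thesis unfolding delta_def .
qed

lemma nth_map2_minus: "k < length h \<Longrightarrow> length h = length d \<Longrightarrow> map2 (-) h d ! k = h ! k - d ! k"
  by simp

lemma antilex_shift:
  assumes "length d = n" "length h = n"
  shows "antilex d h \<longleftrightarrow> pos (map2 (-) h d)"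
  using assms unfolding antilex_def pos_def by auto

lemma z0_not_pos: "\<not> pos (replicate n 0)"
  unfolding pos_def by auto

lemma manh_z0: "length y = n \<Longrightarrow> manhattan (replicate n 0) y = nrm y"
  unfolding manhattan_def nrm_def by simp

lemma manh_refl: "manhattan a a = 0"
  unfolding manhattan_def by simp

lemma nrm_nonneg: "0 \<le> nrm x"
  unfolding nrm_def by (simp add: sum_nonneg)

lemma btw_nrm:
  assumes "btw y x" shows "nrm y \<le> nrm x"
proof -
  have l: "length y = length x" using assms unfolding btw_def by simp
  have "(\<Sum>i<length x. \<bar>y ! i\<bar>) \<le> (\<Sum>i<length x. \<bar>x ! i\<bar>)"
    using assms unfolding btw_def by (intro sum_mono) force
  then show ?thesis unfolding nrm_def l .
qed

context
  fixes n m :: nat and \<alpha> :: nat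
  assumes small: "\<alpha> < (m + 1) ^ n"
begin

definition "dl = delta n m \<alpha>"

lemma dl_H: "dl \<in> Hset n m \<alpha>" and dl_min: "\<And>y. y \<in> Hset n m \<alpha> \<Longrightarrow> y \<noteq> dl \<Longrightarrow> antilex dl y"
  using delta_prop[OF small] unfolding dl_def by auto

lemma dl_len: "length dl = n"
  using dl_H unfolding Hset_def cube_def by auto

lemma dl_box: "k < n \<Longrightarrow> 0 \<le> dl ! k \<and> dl ! k \<le> int m"
  using dl_H unfolding Hset_def cube_def by auto

lemma Yset_dl: "Yset n m \<alpha> = (\<lambda>x. map2 (-) x dl) ` Hset n m \<alpha>"
  unfolding Yset_def dl_def by simp

lemma Y1:
  assumes "y \<in> Yset n m \<alpha>"
  shows "length y = n" "y = replicate n 0 \<or> pos y" "\<And>k. k < n \<Longrightarrow> 0 \<le> y ! k + dl ! k \<and> y ! k + dl ! k \<le> int m"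
proof -
  obtain h where h: "h \<in> Hset n m \<alpha>" "y = map2 (-) h dl" using assms unfolding Yset_dl by auto
  have hl: "length h = n" using h(1) unfolding Hset_def cube_def by auto
  show "length y = n" using h hl dl_len by simp
  show "y = replicate n 0 \<or> pos y"
  proof (cases "h = dl")
    case True
    then show ?thesis using h(2) dl_len by (auto intro: nth_equalityI)
  next
    case False
    then have "antilex dl h" using dl_min h(1) by blast
    then show ?thesis using antilex_shift[OF dl_len hl] h(2) by simp
  qed
  show "0 \<le> y ! k + dl ! k \<and> y ! k + dl ! k \<le> int m" if "k < n" for k
    using h that hl dl_len unfolding Hset_def cube_def by auto
qed

lemma Y0: "replicate n 0 \<in> Yset n m \<alpha>"
proof -
  have "map2 (-) dl dl = replicate n 0" using dl_len by (auto intro: nth_equalityI)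
  then show ?thesis unfolding Yset_dl using dl_H by (metis image_eqI)
qed

lemma Y2:
  assumes len: "length y = n" and p: "pos y" and box: "\<And>k. k < n \<Longrightarrow> 0 \<le> y ! k + dl ! k \<and> y ! k + dl ! k \<le> int m"
  shows "y \<in> Yset n m \<alpha>"
proof -
  define h where "h = map2 (+) y dl"
  have hl: "length h = n" unfolding h_def using len dl_len by simp
  have hn: "h ! k = y ! k + dl ! k" if "k < n" for k unfolding h_def using that len dl_len by simp
  have hc: "h \<in> cube n m" unfolding cube_def using hl hn box by auto
  have yh: "map2 (-) h dl = y" using hl dl_len len hn by (auto intro: nth_equalityI)
  have ah: "antilex dl h" using antilex_shift[OF dl_len hl] yh p by simp
  have sub: "{z \<in> cube n m. antilex z dl} \<subseteq> {z \<in> cube n m. antilex z h}"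
    using ah antilex_trans by blast
  have "\<alpha> \<le> card {z \<in> cube n m. antilex z dl}" using dl_H unfolding Hset_def by simp
  also have "\<dots> \<le> card {z \<in> cube n m. antilex z h}"
    using sub finite_cube by (intro card_mono) auto
  finally have "h \<in> Hset n m \<alpha>" unfolding Hset_def using hc by simp
  then show ?thesis unfolding Yset_dl using yh by (metis image_eqI)
qed

lemma finite_Y: "finite (Yset n m \<alpha>)"
  unfolding Yset_def Hset_def using finite_cube by simp

end

lemma floor_half: "\<lfloor>real_of_int r / 2\<rfloor> = r div 2"
  using floor_divide_of_int_eq[of r 2] by simp

lemma ceil_half: "\<lceil>real_of_int r / 2\<rceil> = r - r div 2"
proof -
  have "\<lceil>real_of_int r / 2\<rceil> = - \<lfloor>real_of_int (- r) / 2\<rfloor>"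
    by (simp add: ceiling_def)
  also have "\<dots> = - ((- r) div 2)" using floor_divide_of_int_eq[of "- r" 2] by simp
  also have "\<dots> = r - r div 2" by presburger
  finally show ?thesis .
qed

theorem lemma3p6:
  fixes n m \<alpha> :: nat and r :: int
  assumes "n \<ge> 2" and "m \<ge> 1" and "r \<ge> 4"
    and "1 \<le> \<alpha>" and "\<alpha> < (m + 1) ^ n"
  shows "geom_real (Gamma n m \<alpha> r) homotopy_equivalent_space
         geom_real (induced (Gamma n m \<alpha> r)
           {x \<in> vertices (Gamma n m \<alpha> r).
              (\<forall>i<n. \<bar>x ! i\<bar> < \<lfloor>real_of_int r / 2\<rfloor>) \<and>
              (\<forall>j<n. \<forall>k<n. j \<noteq> k \<longrightarrow>
                \<bar>x ! j\<bar> + \<bar>x ! k\<bar> \<le> \<lceil>real_of_int r / 2\<rceil>)})"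
proof -
  note small = assms(5)
  define Y where "Y = Yset n m \<alpha>"
  define z0 where "z0 = replicate n (0::int)"
  define A where "A = (\<lambda>a b. manhattan a b \<le> r)"
  define N where "N = {y \<in> Y. y \<noteq> z0 \<and> manhattan z0 y \<le> r}"
  have r0: "0 \<le> r" using assms(3) by simp
  have lenY: "length y = n" if "y \<in> Y" for y using Y1(1)[OF small] that unfolding Y_def by blast
  have z0Y: "z0 \<in> Y" unfolding z0_def Y_def using Y0[OF small] .
  have G: "Gamma n m \<alpha> r = clq A N"
  proof (intro equalityI subsetI)
    fix \<tau> assume "\<tau> \<in> Gamma n m \<alpha> r"
    then have t: "\<tau> \<subseteq> Y" "finite \<tau>" "\<forall>x\<in>\<tau>. \<forall>y\<in>\<tau>. manhattan x y \<le> r" "z0 \<notin> \<tau>"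
      "\<forall>y\<in>\<tau>. manhattan z0 y \<le> r"
      unfolding Gamma_def link_def VR_def Y_def z0_def by auto
    then show "\<tau> \<in> clq A N" unfolding clq_def A_def N_def by auto
  next
    fix \<tau> assume "\<tau> \<in> clq A N"
    then have t: "\<tau> \<subseteq> Y" "finite \<tau>" "\<forall>x\<in>\<tau>. \<forall>y\<in>\<tau>. manhattan x y \<le> r" "z0 \<notin> \<tau>"
      "\<forall>y\<in>\<tau>. manhattan z0 y \<le> r"
      unfolding clq_def A_def N_def by auto
    have sy: "manhattan y z0 \<le> r" if "y \<in> \<tau>" for y
      using t(1,5) that manh_sym[of y z0] lenY unfolding z0_def by auto
    have "insert z0 \<tau> \<in> VR Y r"
      unfolding VR_def using t z0Y sy r0 manh_refl[of z0] by auto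
    then show "\<tau> \<in> Gamma n m \<alpha> r"
      unfolding Gamma_def link_def using t unfolding VR_def Y_def z0_def by auto
  qed
  have V: "vertices (clq A N) = N"
    unfolding vertices_def clq_def A_def using manh_refl r0 by auto
  define Wt where "Wt = {x \<in> N. Wsh r x}"
  have NY: "N \<subseteq> Y" unfolding N_def by auto
  have set_eq: "{x \<in> vertices (Gamma n m \<alpha> r).
              (\<forall>i<n. \<bar>x ! i\<bar> < \<lfloor>real_of_int r / 2\<rfloor>) \<and>
              (\<forall>j<n. \<forall>k<n. j \<noteq> k \<longrightarrow>
                \<bar>x ! j\<bar> + \<bar>x ! k\<bar> \<le> \<lceil>real_of_int r / 2\<rceil>)} = Wt"
    unfolding G V Wt_def Wsh_def floor_half ceil_half using lenY NY by auto
  have I: "induced (clq A N) Wt = clq A Wt"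
    unfolding induced_def clq_def Wt_def by auto
  define \<rho> where "\<rho> x = (if Wsh r x then 0 else if Pst r x then 1 else nat (nrm x) + 2)" for x
  have xfacts: "length x = n \<and> pos x \<and> nrm x \<le> r \<and> (\<forall>k<n. 0 \<le> x ! k + dl n m \<alpha> ! k \<and> x ! k + dl n m \<alpha> ! k \<le> int m)"
    if "x \<in> N" for x
  proof -
    have xY: "x \<in> Y" and xz: "x \<noteq> z0" and xr: "manhattan z0 x \<le> r" using that unfolding N_def by auto
    have l: "length x = n" using lenY xY .
    have "pos x" using Y1(2)[OF small, of x] xY xz unfolding Y_def z0_def by blast
    moreover have "nrm x \<le> r" using xr manh_z0[OF l] unfolding z0_def by simp
    ultimately show ?thesis using l Y1(3)[OF small, of x] xY unfolding Y_def by blast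
  qed
  have inN: "y \<in> N \<and> nrm y \<le> nrm x" if "x \<in> N" "btw y x" "pos y" for x y
  proof -
    have xf: "length x = n" "pos x" "nrm x \<le> r" "\<And>k. k < n \<Longrightarrow> 0 \<le> x ! k + dl n m \<alpha> ! k \<and> x ! k + dl n m \<alpha> ! k \<le> int m"
      using xfacts[OF that(1)] by auto
    have ly: "length y = n" using that(2) xf(1) unfolding btw_def by simp
    have box: "0 \<le> y ! k + dl n m \<alpha> ! k \<and> y ! k + dl n m \<alpha> ! k \<le> int m" if "k < n" for k
    proof -
      have "(0 \<le> y ! k \<and> y ! k \<le> x ! k) \<or> (x ! k \<le> y ! k \<and> y ! k \<le> 0)"
        using \<open>btw y x\<close> that xf(1) unfolding btw_def by auto
      moreover have "0 \<le> dl n m \<alpha> ! k \<and> dl n m \<alpha> ! k \<le> int m" using dl_box[OF small that] .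
      ultimately show ?thesis using xf(4)[OF that] by linarith
    qed
    have yY: "y \<in> Y" unfolding Y_def using Y2[OF small ly that(3)] box by blast
    have nyx: "nrm y \<le> nrm x" using btw_nrm[OF that(2)] .
    have "y \<noteq> z0" using that(3) z0_not_pos unfolding z0_def by blast
    moreover have "manhattan z0 y \<le> r" using manh_z0[OF ly] nyx xf(3) unfolding z0_def by simp
    ultimately show ?thesis using yY nyx unfolding N_def by blast
  qed
  have main: "geom_real (clq A N) homotopy_equivalent_space geom_real (clq A Wt)"
  proof (rule rank_reduce[where \<rho> = \<rho>])
    show "finite N" using finite_Y[OF small] NY finite_subset unfolding Y_def by blast
    show "Wt \<subseteq> N" unfolding Wt_def by auto
    show "\<rho> w = 0" if "w \<in> Wt" for w using that unfolding Wt_def \<rho>_def by auto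
    show "0 < \<rho> x" if "x \<in> N" "x \<notin> Wt" for x using that unfolding Wt_def \<rho>_def by auto
    show "A b a" if "a \<in> N" "b \<in> N" "A a b" for a b
      using that manh_sym[of a b] lenY NY unfolding A_def by (metis subsetD)
    show "A a a" if "a \<in> N" for a unfolding A_def using manh_refl r0 by simp
    show "\<exists>y\<in>N. \<rho> y < \<rho> x \<and> (\<forall>z\<in>N. \<rho> z \<le> \<rho> x \<longrightarrow> A x z \<longrightarrow> A y z)"
      if xN: "x \<in> N" and xW: "x \<notin> Wt" for x
    proof -
      have nW: "\<not> Wsh r x" using xN xW unfolding Wt_def by auto
      have xf: "length x = n" "pos x" "nrm x \<le> r" using xfacts[OF xN] by auto
      show ?thesis
      proof (cases "Pst r x")
        case True
        obtain y where y: "pos y" "btw y x" "Wsh r y"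
          and yd: "\<And>z. length z = n \<Longrightarrow> Wsh r z \<or> Pst r z \<Longrightarrow> manhattan x z \<le> r \<Longrightarrow> manhattan y z \<le> r"
          using pst_dom[OF xf(1) xf(2) assms(3) True] by blast
        have yN: "y \<in> N" using inN[OF xN y(2) y(1)] by blast
        have ry: "\<rho> y < \<rho> x" unfolding \<rho>_def using y(3) nW True by simp
        have "A y z" if "z \<in> N" "\<rho> z \<le> \<rho> x" "A x z" for z
        proof -
          have "Wsh r z \<or> Pst r z" using that(2) True nW unfolding \<rho>_def by (auto split: if_splits)
          then show ?thesis using yd[of z] that lenY NY unfolding A_def by blast
        qed
        then show ?thesis using yN ry by blast
      next
        case False
        obtain y where y: "domg r x y" using comb_dom[OF xf(1) xf(2) xf(3) assms(3) nW False] by blast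
        then have y1: "pos y" "btw y x" "nrm y < nrm x"
          and yd: "\<And>z. length z = length x \<Longrightarrow> nrm z \<le> r \<Longrightarrow> manhattan x z \<le> r \<Longrightarrow> manhattan y z \<le> r"
          unfolding domg_def by auto
        have yN: "y \<in> N" using inN[OF xN y1(2) y1(1)] by blast
        have "nat (nrm y) < nat (nrm x)" using y1(3) nrm_nonneg[of y] by simp
        then have ry: "\<rho> y < \<rho> x" unfolding \<rho>_def using nW False by simp
        have "A y z" if "z \<in> N" "A x z" for z
        proof -
          have zf: "length z = n" "nrm z \<le> r" using xfacts[OF that(1)] by auto
          then show ?thesis using yd[of z] that xf(1) unfolding A_def by simp
        qed
        then show ?thesis using yN ry by blast
      qed
    qed
  qed
  show ?thesis unfolding set_eq unfolding G I using main .
qed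

end
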